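(* Let $\theta_0:\mathbb{R}^d\to\mathbb{R}^{d_\theta}$ be measurable and, for each $N\ge1$, let $\hat\theta_N:\mathbb{R}^d\to\mathbb{R}^{d_\theta}$ be a (possibly random) estimator built from data independent of $X^s$ and $X^t$. Suppose (i) $\|\hat\theta_N(X^s)\|_\infty\le\xi_N$ almost surely for every $N\ge1$; (ii) $\mathbb{E}\|\theta_0(X^s)\|_\infty^4<\infty$; (iii) $r_0(X^s)$ is sub-exponentially distributed. Then for $N\ge2$, $$\mathbb{E}\|\hat\theta_N(X^t)-\theta_0(X^t)\|_2^2=\mathbb{E}\big[\|\hat\theta_N(X^s)-\theta_0(X^s)\|_2^2\,r_0(X^s)\big]\le c_1\,\mathbb{E}\|\hat\theta_N(X^s)-\theta_0(X^s)\|_2^2\log N+\frac{c_2d_\theta(\xi_N^2+1)}{N},$$ with constants $c_1,c_2$ not depending on $N$.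
   Context: $X^s,X^t$ are random vectors in $\mathbb{R}^d$ with Lebesgue densities $p,q$, $\{q>0\}\subset\{p>0\}$, and density ratio $r_0=q/p$ (with $0/0=0$). A real random variable $V$ is sub-exponentially distributed if $\mathbb{E}\exp(\varsigma|V|)<\infty$ for some $\varsigma>0$. Expectations are over both the test point and the randomness of $\hat\theta_N$. *)

theory Defs
  imports "HOL-Probability.Probability"
begin

text \<open>Density ratio r0 = q / p (division by zero yields 0 in Isabelle, so 0/0 = 0).\<close>
definition density_ratio :: "('a \<Rightarrow> real) \<Rightarrow> ('a \<Rightarrow> real) \<Rightarrow> 'a \<Rightarrow> real" where
  "density_ratio p q x = q x / p x"

definition sub_exponential :: "'a measure \<Rightarrow> ('a \<Rightarrow> real) \<Rightarrow> bool" where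
  "sub_exponential P V \<longleftrightarrow> V \<in> borel_measurable P \<and>
     (\<exists>s>0. (\<integral>\<^sup>+x. ennreal (exp (s * \<bar>V x\<bar>)) \<partial>P) < \<infinity>)"

end

theory Submission imports Defs begin

lemma key:
  fixes f r A xi s n k :: real
  assumes s: "s > 0" and n: "n \<ge> 2" and k: "k \<ge> 1" and r: "r \<ge> 0" and f0: "f \<ge> 0" and A: "A \<ge> 0"
    and fb: "f \<le> 2*k*xi\<^sup>2 + 2*k*A"
  shows "f*r \<le> (4/s)*ln n * f + k*(xi\<^sup>2+1)/n * ((8/s+16/s\<^sup>2)*exp(s*r) + A\<^sup>2)"
proof -
  have n0: "n > 0" using n by simp
  have G0: "0 \<le> k*(xi\<^sup>2+1)/n * ((8/s+16/s\<^sup>2)*exp(s*r) + A\<^sup>2)"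
    using k n0 s A by (intro mult_nonneg_nonneg divide_nonneg_nonneg add_nonneg_nonneg) auto
  show ?thesis
  proof (cases "r \<le> (4/s)*ln n")
    case True
    have "f*r \<le> f*((4/s)*ln n)" using True f0 by (rule mult_left_mono)
    then show ?thesis using G0 by (simp add: mult.commute)
  next
    case False
    define X where "X = exp(s*r/4)"
    have X0: "X > 0" unfolding X_def by simp
    have "ln n < s*r/4" using False s by (simp add: field_simps)
    then have XN: "n \<le> X" unfolding X_def using n0 by (metis exp_ln less_eq_real_def exp_less_mono)
    have E: "exp(s*r) = X^4" unfolding X_def
      by (simp add: exp_of_nat_mult[symmetric])
    have rX: "r \<le> (4/s)*X"
    proof -
      have "s*r/4 \<le> X" unfolding X_def by (meson exp_ge_add_one_self add_le_cancel_left le_add_same_cancel2 order_trans linorder_not_le zero_le_one exp_gt_zero less_le_not_le) 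
      then show ?thesis using s by (simp add: field_simps)
    qed
    have X3: "n^3 \<le> X^3" using XN n0 by (simp add: power_mono)
    have X2: "n^2 \<le> X^2" using XN n0 by (simp add: power_mono)
    have t1: "r \<le> (4/s) * X^4 / n^3"
    proof -
      have "(4/s)*X = (4/s)*X*n^3/n^3" using n0 by simp
      also have "\<dots> \<le> (4/s)*X*X^3/n^3" using X3 s X0 n0
        by (intro divide_right_mono mult_left_mono) auto
      also have "\<dots> = (4/s)*X^4/n^3" by (simp add: power_numeral_reduce)
      finally show ?thesis using rX by simp
    qed
    have t2: "n * r^2 \<le> (16/s^2) * X^4 / n"
    proof -
      have "n*r^2 \<le> n*((4/s)*X)^2" using rX r n0 by (intro mult_left_mono power_mono) auto
      also have "\<dots> = (16/s^2)*(n^2 * X^2)/n" using n0 by (simp add: field_simps power2_eq_square)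
      also have "\<dots> \<le> (16/s^2)*(X^2*X^2)/n"
      proof -
        have "n^2 * X^2 \<le> X^2*X^2" using X2 by (rule mult_right_mono) simp
        then show ?thesis using n0 s by (intro divide_right_mono mult_left_mono) auto
      qed
      also have "\<dots> = (16/s^2) * X^4 / n" by (simp add: power_numeral_reduce)
      finally show ?thesis .
    qed
    have t3: "A*r \<le> A^2/(2*n) + n*r^2/2"
    proof -
      have "0 \<le> (A/sqrt n - sqrt n * r)^2" by simp
      also have "\<dots> = A^2/n - 2*A*r + n*r^2" using n0
        by (simp add: power2_eq_square field_simps)
      finally show ?thesis by (simp add: field_simps)
    qed
    have "f*r \<le> (2*k*xi\<^sup>2 + 2*k*A)*r" using fb r by (simp add: mult_right_mono)
    also have "\<dots> = 2*k*xi\<^sup>2*r + 2*k*(A*r)" by (simp add: algebra_simps)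
    also have "\<dots> \<le> 2*k*xi\<^sup>2*((4/s) * X^4 / n^3) + 2*k*(A^2/(2*n) + n*r^2/2)"
      using t1 t3 k by (intro add_mono mult_left_mono) auto
    also have "\<dots> \<le> 2*k*xi\<^sup>2*((4/s) * X^4 / n) + 2*k*(A^2/(2*n) + (16/s^2) * X^4 / n/2)"
    proof -
      have "1 \<le> n^2" using n by (metis one_le_power dual_order.trans one_le_numeral)
      then have "n*1 \<le> n*n^2" using n0 by (intro mult_left_mono) auto
      then have "n \<le> n^3" by (simp add: power_numeral_reduce power2_eq_square)
      then have "X^4/n^3 \<le> X^4/n" using n n0 X0
        by (intro divide_left_mono) auto
      then have "(4/s) * (X^4 / n^3) \<le> (4/s) * (X^4 / n)" using s by (intro mult_left_mono) auto
      then have "(4/s) * X^4 / n^3 \<le> (4/s) * X^4 / n" by simp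
      moreover have "n*r^2/2 \<le> (16/s^2)*X^4/n/2" using t2 by (intro divide_right_mono) auto
      ultimately show ?thesis using k by (intro add_mono mult_left_mono) auto
    qed
    also have "\<dots> = k/n*(xi\<^sup>2*(8/s)*X^4 + A^2 + (16/s^2)*X^4)"
      using n0 s by (simp add: field_simps)
    also have "\<dots> \<le> k*(xi\<^sup>2+1)/n * ((8/s+16/s\<^sup>2)*exp(s*r) + A\<^sup>2)"
    proof -
      have d: "k*(xi\<^sup>2+1)/n * ((8/s+16/s\<^sup>2)*X^4 + A\<^sup>2) - k/n*(xi\<^sup>2*(8/s)*X^4 + A^2 + (16/s^2)*X^4)
          = k/n*((8/s)*X^4 + xi\<^sup>2*(16/s^2)*X^4 + xi\<^sup>2*A^2)"
        by (simp add: algebra_simps add_divide_distrib)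
      have "0 \<le> k/n*((8/s)*X^4 + xi\<^sup>2*(16/s^2)*X^4 + xi\<^sup>2*A^2)"
        using k n0 s X0 by (intro mult_nonneg_nonneg add_nonneg_nonneg) auto
      then show ?thesis using d unfolding E by linarith
    qed
    finally have "f*r \<le> k*(xi\<^sup>2+1)/n * ((8/s+16/s\<^sup>2)*exp(s*r) + A\<^sup>2)" .
    moreover have "0 \<le> (4/s)*ln n * f" using s n f0 by simp
    ultimately show ?thesis by linarith
  qed
qed

lemma fbound:
  fixes a b :: "real^'k"
  assumes "infnorm a \<le> xi"
  shows "(norm (a - b))\<^sup>2 \<le> 2*real CARD('k)*xi\<^sup>2 + 2*real CARD('k)*(infnorm b)\<^sup>2"
proof -
  have ia: "0 \<le> infnorm a" "0 \<le> infnorm b" by (simp_all add: infnorm_pos_le)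
  have na: "(norm a)\<^sup>2 \<le> real CARD('k) * (infnorm a)\<^sup>2"
  proof -
    have "norm a \<le> sqrt (real CARD('k)) * infnorm a" using norm_le_infnorm[of a] by simp
    then have "(norm a)\<^sup>2 \<le> (sqrt (real CARD('k)) * infnorm a)\<^sup>2" by (intro power_mono) auto
    then show ?thesis by (simp add: power_mult_distrib)
  qed
  have nb: "(norm b)\<^sup>2 \<le> real CARD('k) * (infnorm b)\<^sup>2"
  proof -
    have "norm b \<le> sqrt (real CARD('k)) * infnorm b" using norm_le_infnorm[of b] by simp
    then have "(norm b)\<^sup>2 \<le> (sqrt (real CARD('k)) * infnorm b)\<^sup>2" by (intro power_mono) auto
    then show ?thesis by (simp add: power_mult_distrib)
  qed
  have ax: "(infnorm a)\<^sup>2 \<le> xi\<^sup>2" using assms ia by (intro power_mono) auto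
  have "(norm (a - b))\<^sup>2 \<le> (norm a + norm b)\<^sup>2"
    by (intro power_mono norm_triangle_ineq4) auto
  also have "\<dots> \<le> 2*(norm a)\<^sup>2 + 2*(norm b)\<^sup>2"
    using sum_squares_bound[of "norm a" "norm b"] by (simp add: power2_sum)
  also have "\<dots> \<le> 2*(real CARD('k) * xi\<^sup>2) + 2*(real CARD('k) * (infnorm b)\<^sup>2)"
    using na nb ax by (smt (verit) mult_left_mono of_nat_0_le_iff)
  finally show ?thesis by simp
qed

lemma sq_le_1_4: "(x::real)\<^sup>2 \<le> 1 + x^4"
proof (cases "x\<^sup>2 \<le> 1")
  case False
  then have "x\<^sup>2 * 1 \<le> x\<^sup>2 * x\<^sup>2" by (intro mult_left_mono) auto
  then show ?thesis by (simp add: power_numeral_reduce power2_eq_square)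
qed (smt (verit) zero_le_power_eq_numeral even_numeral)

lemma distr_snd_prob:
  assumes "prob_space M" "prob_space N"
  shows "distr (M \<Otimes>\<^sub>M N) N snd = N"
proof -
  interpret pair_prob_space M N using assms
    by (simp add: pair_prob_space_def pair_sigma_finite_def prob_space_imp_sigma_finite)
  show ?thesis
  proof (rule measure_eqI)
    show "sets (distr (M \<Otimes>\<^sub>M N) N snd) = sets N" by simp
    fix A assume A: "A \<in> sets (distr (M \<Otimes>\<^sub>M N) N snd)"
    then have A': "A \<in> sets N" by simp
    have "snd -` A \<inter> space (M \<Otimes>\<^sub>M N) = space M \<times> A"
      using sets.sets_into_space[OF A'] by (auto simp: space_pair_measure)
    then show "emeasure (distr (M \<Otimes>\<^sub>M N) N snd) A = emeasure N A"
      using A' by (simp add: emeasure_distr M2.emeasure_pair_measure_Times M1.emeasure_space_1)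
  qed
qed

theorem corollary4p2:
  fixes p q :: "real^'d \<Rightarrow> real"
    and \<theta>0 :: "real^'d \<Rightarrow> real^'k"
    and M :: "'w measure"
    and \<theta>hat :: "nat \<Rightarrow> 'w \<Rightarrow> real^'d \<Rightarrow> real^'k"
    and \<xi> :: "nat \<Rightarrow> real"
  defines "Ps \<equiv> density lborel (\<lambda>x. ennreal (p x))"
    and "Pt \<equiv> density lborel (\<lambda>x. ennreal (q x))"
    and "r0 \<equiv> density_ratio p q"
  assumes p_meas: "p \<in> borel_measurable lborel"
    and q_meas: "q \<in> borel_measurable lborel"
    and p_nonneg: "\<And>x. p x \<ge> 0"
    and q_nonneg: "\<And>x. q x \<ge> 0"
    and Ps_prob: "prob_space Ps"
    and Pt_prob: "prob_space Pt"
    and supp: "{x. q x > 0} \<subseteq> {x. p x > 0}"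
    and M_prob: "prob_space M"
    and \<theta>0_meas: "\<theta>0 \<in> borel_measurable lborel"
    and \<theta>hat_meas: "\<And>N. (\<lambda>(\<omega>, x). \<theta>hat N \<omega> x) \<in> borel_measurable (M \<Otimes>\<^sub>M lborel)"
    and bound: "\<And>N. N \<ge> 1 \<Longrightarrow> AE z in M \<Otimes>\<^sub>M Ps. infnorm (\<theta>hat N (fst z) (snd z)) \<le> \<xi> N"
    and moment4: "integrable Ps (\<lambda>x. infnorm (\<theta>0 x) ^ 4)"
    and subexp: "sub_exponential Ps r0"
  shows "\<exists>c1 c2 :: real. \<forall>N::nat. N \<ge> 2 \<longrightarrow>
      (\<integral>z. (norm (\<theta>hat N (fst z) (snd z) - \<theta>0 (snd z)))\<^sup>2 \<partial>(M \<Otimes>\<^sub>M Pt))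
        = (\<integral>z. (norm (\<theta>hat N (fst z) (snd z) - \<theta>0 (snd z)))\<^sup>2 * r0 (snd z) \<partial>(M \<Otimes>\<^sub>M Ps))
    \<and> (\<integral>z. (norm (\<theta>hat N (fst z) (snd z) - \<theta>0 (snd z)))\<^sup>2 * r0 (snd z) \<partial>(M \<Otimes>\<^sub>M Ps))
        \<le> c1 * (\<integral>z. (norm (\<theta>hat N (fst z) (snd z) - \<theta>0 (snd z)))\<^sup>2 \<partial>(M \<Otimes>\<^sub>M Ps)) * ln (real N)
          + c2 * real CARD('k) * ((\<xi> N)\<^sup>2 + 1) / real N"
proof -
  have sPs: "sets Ps = sets lborel" "space Ps = UNIV" unfolding Ps_def by auto
  have r0_nn: "\<And>x. r0 x \<ge> 0" unfolding r0_def density_ratio_def using p_nonneg q_nonneg by simp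
  have r0_meas: "r0 \<in> borel_measurable lborel"
    unfolding r0_def density_ratio_def[abs_def] using p_meas q_meas by measurable
  have q_eq: "q x = p x * r0 x" for x
  proof (cases "p x = 0")
    case True
    then have "\<not> q x > 0" using supp by auto
    then show ?thesis using q_nonneg[of x] True by simp
  next
    case False
    then show ?thesis unfolding r0_def density_ratio_def by simp
  qed
  have Pt_eq: "Pt = density Ps (\<lambda>x. ennreal (r0 x))"
  proof -
    have "density Ps (\<lambda>x. ennreal (r0 x)) = density lborel (\<lambda>x. ennreal (p x) * ennreal (r0 x))"
      unfolding Ps_def
      by (rule density_density_eq[OF measurable_compose[OF p_meas measurable_ennreal] measurable_compose[OF r0_meas measurable_ennreal]])
    also have "\<dots> = Pt" unfolding Pt_def
      by (simp add: q_eq ennreal_mult p_nonneg r0_nn)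
    finally show ?thesis by simp
  qed
  interpret Ps: prob_space Ps by (rule Ps_prob)
  interpret M: prob_space M by (rule M_prob)
  have r0_measPs: "r0 \<in> borel_measurable Ps"
    by (subst measurable_cong_sets[OF sPs(1) refl]) (rule r0_meas)
  have c1m: "(\<lambda>_. 1::ennreal) \<in> borel_measurable M" by simp
  have prod_eq: "M \<Otimes>\<^sub>M Pt = density (M \<Otimes>\<^sub>M Ps) (\<lambda>z. ennreal (r0 (snd z)))"
  proof -
    have "M \<Otimes>\<^sub>M Pt = density M (\<lambda>_. 1) \<Otimes>\<^sub>M density Ps (\<lambda>x. ennreal (r0 x))"
      by (simp add: density_1 Pt_eq)
    also have "\<dots> = density (M \<Otimes>\<^sub>M Ps) (\<lambda>(x,y). 1 * ennreal (r0 y))"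
      by (rule pair_measure_density[OF c1m measurable_compose[OF r0_measPs measurable_ennreal]
          prob_space_imp_sigma_finite[OF Ps_prob] prob_space_imp_sigma_finite[OF Pt_prob[unfolded Pt_eq]]])
    also have "\<dots> = density (M \<Otimes>\<^sub>M Ps) (\<lambda>z. ennreal (r0 (snd z)))"
      by (simp add: case_prod_beta')
    finally show ?thesis .
  qed

  define F where "F N z = (norm (\<theta>hat N (fst z) (snd z) - \<theta>0 (snd z)))\<^sup>2" for N z
  have sprod: "sets (M \<Otimes>\<^sub>M Ps) = sets (M \<Otimes>\<^sub>M lborel)"
    by (rule sets_pair_measure_cong) (auto simp: sPs)
  have Fm: "(\<lambda>z. F N z) \<in> borel_measurable (M \<Otimes>\<^sub>M Ps)" for N
  proof -
    have h1: "(\<lambda>z. \<theta>hat N (fst z) (snd z)) \<in> borel_measurable (M \<Otimes>\<^sub>M lborel)"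
      using \<theta>hat_meas[of N] by (simp add: case_prod_beta')
    have h2: "(\<lambda>z. \<theta>0 (snd z)) \<in> borel_measurable (M \<Otimes>\<^sub>M lborel)"
      by (rule measurable_compose[OF measurable_snd \<theta>0_meas])
    note h1[measurable] h2[measurable]
    have "(\<lambda>z. F N z) \<in> borel_measurable (M \<Otimes>\<^sub>M lborel)" unfolding F_def by measurable
    then show ?thesis by (subst measurable_cong_sets[OF sprod refl])
  qed
  have r0snd: "(\<lambda>z. r0 (snd z)) \<in> borel_measurable (M \<Otimes>\<^sub>M Ps)"
    by (rule measurable_compose[OF measurable_snd r0_measPs])
  have eq: "(\<integral>z. F N z \<partial>(M \<Otimes>\<^sub>M Pt)) = (\<integral>z. F N z * r0 (snd z) \<partial>(M \<Otimes>\<^sub>M Ps))" for N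
  proof -
    have "(\<integral>z. F N z \<partial>(M \<Otimes>\<^sub>M Pt)) = (\<integral>z. r0 (snd z) *\<^sub>R F N z \<partial>(M \<Otimes>\<^sub>M Ps))"
      unfolding prod_eq by (rule integral_density[OF Fm r0snd]) (simp add: r0_nn)
    then show ?thesis by (simp add: mult.commute)
  qed
  obtain s where s: "s > 0" and fin: "(\<integral>\<^sup>+x. ennreal (exp (s * \<bar>r0 x\<bar>)) \<partial>Ps) < \<infinity>"
    using subexp unfolding sub_exponential_def by blast
  note r0_measPs[measurable]
  have expint: "integrable Ps (\<lambda>x. exp (s * r0 x))"
    by (rule integrableI_bounded) (use fin in \<open>simp_all add: r0_nn\<close>)
  define G where "G x = (8/s+16/s\<^sup>2)*exp(s*r0 x) + ((infnorm (\<theta>0 x))\<^sup>2)\<^sup>2" for x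
  have m4: "integrable Ps (\<lambda>x. ((infnorm (\<theta>0 x))\<^sup>2)\<^sup>2)"
    using moment4 by (simp add: power_mult[symmetric])
  have Gint: "integrable Ps G" unfolding G_def
    by (intro Bochner_Integration.integrable_add integrable_mult_right expint m4)
  have sndI: "integrable (M \<Otimes>\<^sub>M Ps) (\<lambda>z. h (snd z))" if "integrable Ps h" for h :: "real^'d \<Rightarrow> real"
    using integrable_distr_eq[OF measurable_snd[of M Ps] borel_measurable_integrable[OF that]]
      distr_snd_prob[OF M_prob Ps_prob] that by simp
  interpret P: pair_prob_space M Ps
    by (simp add: pair_prob_space_def pair_sigma_finite_def prob_space_imp_sigma_finite M_prob Ps_prob
        M.prob_space_axioms Ps.prob_space_axioms)
  define c2 where "c2 = (\<integral>z. G (snd z) \<partial>(M \<Otimes>\<^sub>M Ps))"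
  have main: "(\<integral>z. F N z * r0 (snd z) \<partial>(M \<Otimes>\<^sub>M Ps))
        \<le> (4/s) * (\<integral>z. F N z \<partial>(M \<Otimes>\<^sub>M Ps)) * ln (real N)
          + c2 * real CARD('k) * ((\<xi> N)\<^sup>2 + 1) / real N" if N: "N \<ge> 2" for N
  proof -
    let ?k = "real CARD('k)"
    let ?C = "?k * ((\<xi> N)\<^sup>2 + 1) / real N"
    have nN: "real N \<ge> 2" using N by simp
    have N1: "N \<ge> 1" using N by simp
    have AEb: "AE z in M \<Otimes>\<^sub>M Ps. F N z * r0 (snd z) \<le> (4/s)*ln (real N) * F N z + ?C * G (snd z)"
      using bound[of N, OF N1]
    proof (eventually_elim)
      case (elim z)
      show ?case unfolding G_def F_def
        by (rule key[OF s nN _ r0_nn _ _ fbound[OF elim(1)]]) auto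
    qed
    have AEF: "AE z in M \<Otimes>\<^sub>M Ps. norm (F N z) \<le> norm (2*?k*(\<xi> N)\<^sup>2 + 2*?k*(1 + (infnorm (\<theta>0 (snd z)))^4))"
      using bound[of N, OF N1]
    proof (eventually_elim)
      case (elim z)
      have i0: "0 \<le> infnorm (\<theta>hat N (fst z) (snd z))" by (simp add: infnorm_pos_le)
      have "F N z \<le> 2*?k*(\<xi> N)\<^sup>2 + 2*?k*(infnorm (\<theta>0 (snd z)))\<^sup>2"
        unfolding F_def by (rule fbound[OF elim(1)])
      also have "\<dots> \<le> 2*?k*(\<xi> N)\<^sup>2 + 2*?k*(1 + (infnorm (\<theta>0 (snd z)))^4)"
        using sq_le_1_4[of "infnorm (\<theta>0 (snd z))"] by (intro add_left_mono mult_left_mono) auto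
      finally show ?case unfolding F_def by simp
    qed
    have Fint: "integrable (M \<Otimes>\<^sub>M Ps) (\<lambda>z. F N z)"
      by (rule Bochner_Integration.integrable_bound[OF _ Fm AEF])
        (intro Bochner_Integration.integrable_add integrable_mult_right P.integrable_const sndI moment4)
    have Hint: "integrable (M \<Otimes>\<^sub>M Ps) (\<lambda>z. (4/s)*ln (real N) * F N z + ?C * G (snd z))"
      by (intro Bochner_Integration.integrable_add integrable_mult_right Fint sndI Gint)
    have H0: "AE z in M \<Otimes>\<^sub>M Ps. 0 \<le> (4/s)*ln (real N) * F N z + ?C * G (snd z)"
      using s nN unfolding G_def F_def by (intro AE_I2 add_nonneg_nonneg mult_nonneg_nonneg) auto
    have "(\<integral>z. F N z * r0 (snd z) \<partial>(M \<Otimes>\<^sub>M Ps)) \<le> (\<integral>z. (4/s)*ln (real N) * F N z + ?C * G (snd z) \<partial>(M \<Otimes>\<^sub>M Ps))"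
      by (rule integral_mono_AE'[OF Hint AEb H0])
    also have "\<dots> = (4/s)*ln (real N) * (\<integral>z. F N z \<partial>(M \<Otimes>\<^sub>M Ps)) + ?C * c2"
      unfolding c2_def using Fint sndI[OF Gint]
      by (simp add: Bochner_Integration.integral_add)
    finally show ?thesis by (simp add: mult_ac)
  qed
  show ?thesis
    by (rule exI[of _ "4/s"], rule exI[of _ c2]) (use eq main in \<open>simp add: F_def\<close>)
qed

end
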